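(* Let $n,N$ be positive integers. For $f,\phi\in[0,1]$ let $a_{f,\phi}=e^{i2\pi\phi}\left[1,\ e^{i2\pi f},\ \ldots,\ e^{i2\pi(n-1)f}\right]^T\in\mathbb{C}^n$, and let $\mathcal{A}=\{a_{f,\phi}: f,\phi\in[0,1]\}$ and $\mathcal{A}_N=\{a_{m/N,\phi}: m=0,\ldots,N-1,\ \phi\in[0,1]\}$. Then for every $x\in\mathbb{C}^n$, $$\left(1-\frac{2\pi n}{N}\right)\|x\|_{\mathcal{A}_N}\le\|x\|_{\mathcal{A}}\le\|x\|_{\mathcal{A}_N}.$$
   Context: For a set $\mathcal{B}\subset\mathbb{C}^n$, the atomic norm is the gauge $\|x\|_{\mathcal{B}}=\inf\{t>0: x\in t\,\operatorname{conv}(\mathcal{B})\}$. *)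

theory Defs
  imports "HOL-Analysis.Analysis" "HOL-Library.Extended_Real"
begin

text \<open>Atomic norm (gauge of the convex hull of the atom set), valued in the
extended reals so that points outside the cone generated by the atoms get
norm \<open>\<infinity>\<close> (Inf of the empty set).\<close>
definition atomic_norm :: "'a::real_vector set \<Rightarrow> 'a \<Rightarrow> ereal" where
  "atomic_norm B x = Inf {ereal t | t. t > 0 \<and> x \<in> (\<lambda>y. t *\<^sub>R y) ` (convex hull B)}"

text \<open>Steering vector \<open>a_{f,\<phi>}\<close>; coordinate \<open>i\<close> carries exponent \<open>idx i\<close>,
where \<open>idx\<close> enumerates the coordinates as \<open>0..n-1\<close>.\<close>
definition steer :: "('n::finite \<Rightarrow> nat) \<Rightarrow> real \<Rightarrow> real \<Rightarrow> complex ^ 'n" where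
  "steer idx f \<phi> = (\<chi> i. cis (2 * pi * \<phi>) * cis (2 * pi * real (idx i) * f))"

definition atoms_cont :: "('n::finite \<Rightarrow> nat) \<Rightarrow> (complex ^ 'n) set" where
  "atoms_cont idx = {steer idx f \<phi> | f \<phi>. f \<in> {0..1} \<and> \<phi> \<in> {0..1}}"

definition atoms_grid :: "('n::finite \<Rightarrow> nat) \<Rightarrow> nat \<Rightarrow> (complex ^ 'n) set" where
  "atoms_grid idx N = {steer idx (real m / real N) \<phi> | m \<phi>. m < N \<and> \<phi> \<in> {0..1}}"

end

theory Submission
  imports Defs
begin


lemma cis_odd_ne1:
  fixes j :: int and n :: nat
  assumes "odd j" "n > 0"
  shows "cis (pi * j / n) \<noteq> 1"
proof
  assume "cis (pi * j / n) = 1"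
  then have "cos (pi * j / n) = 1" by (metis cis.sel(1) one_complex.sel(1))
  then obtain k :: int where k: "pi * j / n = real_of_int k * 2 * pi" using cos_one_2pi_int by blast
  then have "j = 2 * (k * n)"
  proof -
    have "pi * j = k * 2 * pi * n" using k assms(2) by (simp add: field_simps)
    then have "real_of_int j = real_of_int (2 * (k * n))" by simp
    then show ?thesis by linarith
  qed
  then show False using assms(1) by simp
qed

lemma geom_zero:
  fixes d :: int and n :: nat
  assumes "d \<noteq> 0" "\<bar>d\<bar> < n"
  shows "(\<Sum>t<n. cis (pi * (2 * real t + 1) * d / n)) = 0"
proof -
  have n: "n > 0" using assms by linarith
  define q where "q = cis (2 * pi * d / n)"
  have eq: "cis (pi * (2 * real t + 1) * d / n) = cis (pi * d / n) * q ^ t" for t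
  proof -
    have "cis (pi * (2 * real t + 1) * d / n) = cis (pi * d / n + real t * (2 * pi * d / n))"
      by (rule arg_cong[where f=cis]) (simp add: add_divide_distrib algebra_simps)
    also have "\<dots> = cis (pi * d / n) * q ^ t" by (simp only: q_def Complex.DeMoivre cis_mult)
    finally show ?thesis .
  qed
  have qn: "q ^ n = 1" unfolding q_def Complex.DeMoivre using n by simp
  have "q \<noteq> 1"
  proof
    assume "q = 1"
    then have "cos (2 * pi * d / n) = 1" unfolding q_def by (metis cis.sel(1) one_complex.sel(1))
    then obtain k :: int where k: "2 * pi * d / n = real_of_int k * 2 * pi" using cos_one_2pi_int by blast
    then have "real_of_int d = real_of_int (k * n)" using n by (simp add: field_simps)
    then have "d = k * n" by linarith
    then show False using assms by (cases "k = 0") (auto simp: abs_mult)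
  qed
  then show ?thesis unfolding eq sum_distrib_left[symmetric] sum_gp_strict using qn by simp
qed

lemma cis_odd_pi: "cis (pi * (2 * real t + 1)) = -1"
proof -
  have "cis (pi * (2 * real t + 1)) = cis (2 * pi * real t) * cis pi"
    unfolding cis_mult by (simp add: algebra_simps)
  also have "\<dots> = -1" by simp
  finally show ?thesis .
qed

lemma cis_odd_pi': "cis (- (pi * (2 * real t + 1))) = -1"
  using cis_odd_pi[of t] by (metis cis_cnj complex_cnj_minus complex_cnj_one)

definition th :: "nat \<Rightarrow> nat \<Rightarrow> real" where "th n t = pi * (2 * real t + 1) / n"
definition cc :: "nat \<Rightarrow> nat \<Rightarrow> complex" where
  "cc n t = 1 / ((1 - cis (th n t)) * (1 - cis (- th n t)))"
definition FF :: "nat \<Rightarrow> nat \<Rightarrow> complex" where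
  "FF n k = (\<Sum>t<n. cc n t * cis (th n t * k))"

lemma th_ne1: assumes "n > 0" shows "cis (th n t) \<noteq> 1" "cis (- th n t) \<noteq> 1"
proof -
  have o1: "odd (2 * int t + 1)" by simp
  have o2: "odd (- (2 * int t + 1))" by simp
  have e1: "real_of_int (2 * int t + 1) = 2 * real t + 1" by simp
  have e2: "real_of_int (- (2 * int t + 1)) = - (2 * real t + 1)" by simp
  show "cis (th n t) \<noteq> 1" using cis_odd_ne1[OF o1 assms] unfolding th_def e1 .
  have "pi * real_of_int (- (2 * int t + 1)) / real n = - th n t" unfolding e2 th_def by (simp add: algebra_simps minus_divide_left)
  then show "cis (- th n t) \<noteq> 1" using cis_odd_ne1[OF o2 assms] by simp
qed

lemma inv_formula:
  assumes "n > 0"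
  shows "1 / (1 - cis (- th n t)) = (1/2) * (\<Sum>m<n. cis (- th n t * real m))"
proof -
  define q where "q = cis (- th n t)"
  have e: "real n * - th n t = - (pi * (2 * real t + 1))" using assms by (simp add: th_def)
  have qn: "q ^ n = -1" unfolding q_def Complex.DeMoivre e by (rule cis_odd_pi')
  have q1: "q \<noteq> 1" unfolding q_def using th_ne1[OF assms] by simp
  have "(\<Sum>m<n. cis (- th n t * real m)) = (\<Sum>m<n. q ^ m)"
    unfolding q_def Complex.DeMoivre by (simp add: mult.commute)
  also have "\<dots> = 2 / (1 - q)" unfolding sum_gp_strict using q1 qn by simp
  finally show ?thesis unfolding q_def by simp
qed

lemma inner_sum:
  assumes "k < n" "m < n"
  shows "(\<Sum>t<n. cis (th n t * (real k - real m))) = (if m = k then of_nat n else 0)"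
proof (cases "m = k")
  case True then show ?thesis by simp
next
  case False
  have "(\<Sum>t<n. cis (th n t * (real k - real m))) = (\<Sum>t<n. cis (pi * (2 * real t + 1) * real_of_int (int k - int m) / n))"
    unfolding th_def by (rule sum.cong) (simp_all add: field_simps)
  also have "\<dots> = 0" by (rule geom_zero) (use assms False in auto)
  finally show ?thesis using False by simp
qed

lemma FF_step:
  assumes "k < n"
  shows "FF n (Suc k) = FF n k - of_nat n / 2"
proof -
  have n: "n > 0" using assms by simp
  have tm: "cc n t * cis (th n t * Suc k) - cc n t * cis (th n t * k)
     = - (1/2) * (\<Sum>m<n. cis (th n t * (real k - real m)))" for t
  proof -
    have a: "1 - cis (th n t) \<noteq> 0" "1 - cis (- th n t) \<noteq> 0" using th_ne1[OF n, of t] by auto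
    have "cc n t * cis (th n t * Suc k) - cc n t * cis (th n t * k)
        = cis (th n t * k) * (cc n t * (cis (th n t) - 1))"
    proof -
      have "cis (th n t * Suc k) = cis (th n t * k) * cis (th n t)" unfolding cis_mult by (simp add: algebra_simps)
      then show ?thesis by (simp add: algebra_simps)
    qed
    also have "cc n t * (cis (th n t) - 1) = - (1 / (1 - cis (- th n t)))"
    proof -
      have g: "x \<noteq> 0 \<Longrightarrow> y \<noteq> 0 \<Longrightarrow> 1 / (x * y) * (- x) = - (1 / y)" for x y :: complex
        by (simp add: field_simps)
      have "cis (th n t) - 1 = - (1 - cis (th n t))" by simp
      then show ?thesis unfolding cc_def using g[OF a] by metis
    qed
    also have "cis (th n t * k) * (- (1 / (1 - cis (- th n t)))) =
      - (1/2) * (\<Sum>m<n. cis (th n t * k) * cis (- th n t * real m))"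
      unfolding inv_formula[OF n] by (simp add: sum_distrib_left sum_negf)
    also have "(\<Sum>m<n. cis (th n t * k) * cis (- th n t * real m)) = (\<Sum>m<n. cis (th n t * (real k - real m)))"
      by (simp add: cis_mult algebra_simps)
    finally show ?thesis .
  qed
  have "FF n (Suc k) - FF n k = (\<Sum>t<n. - (1/2) * (\<Sum>m<n. cis (th n t * (real k - real m))))"
    unfolding FF_def sum_subtractf[symmetric] using tm by simp
  also have "\<dots> = - (1/2) * (\<Sum>m<n. \<Sum>t<n. cis (th n t * (real k - real m)))"
    unfolding sum_distrib_left by (rule sum.swap)
  also have "\<dots> = - (1/2) * (\<Sum>m<n. (if m = k then of_nat n else 0))"
    using inner_sum[OF assms] by simp
  also have "\<dots> = - of_nat n / 2" using assms by simp
  finally show ?thesis by (simp add: algebra_simps)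
qed

lemma FF_lin: "k \<le> n \<Longrightarrow> FF n k = FF n 0 - of_nat k * of_nat n / 2"
proof (induction k)
  case 0 then show ?case by simp
next
  case (Suc k)
  have 1: "FF n (Suc k) = FF n k - of_nat n / 2" using FF_step[of k n] Suc.prems by simp
  have 2: "FF n k = FF n 0 - of_nat k * of_nat n / 2" using Suc by simp
  show ?case unfolding 1 2 by (simp add: field_simps)
qed

lemma FF_n: "FF n n = - FF n 0"
proof -
  have "cis (th n t * n) = -1" if "n > 0" for t
    unfolding th_def using that cis_odd_pi[of t] by simp
  then show ?thesis unfolding FF_def by (cases "n = 0") (auto simp: sum_negf)
qed

lemma FF0: "FF n 0 = of_nat n ^ 2 / 4"
  using FF_lin[of n n] FF_n[of n] by (simp add: power2_eq_square field_simps)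

lemma ramp_identity:
  assumes "k \<le> n" "n > 0"
  shows "of_nat k = of_nat n / 2 - (2 / of_nat n) * FF n k"
  using FF_lin[OF assms(1)] FF0[of n] assms by (simp add: field_simps power2_eq_square)

lemma cc_real: assumes "n > 0" shows "cc n t = of_real (1 / (2 - 2 * cos (th n t)))" "2 - 2 * cos (th n t) > 0"
proof -
  define x where "x = th n t"
  have p: "cis x * cis (-x) = 1" by (simp add: cis_mult)
  have s: "cis x + cis (-x) = of_real (2 * cos x)" by (simp add: complex_eq_iff)
  have "(1 - cis x) * (1 - cis (- x)) = 1 - (cis x + cis (-x)) + cis x * cis (-x)" by (simp add: algebra_simps)
  also have "\<dots> = of_real (2 - 2 * cos x)" unfolding p s by simp
  finally show "cc n t = of_real (1 / (2 - 2 * cos (th n t)))" unfolding cc_def x_def by simp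
  have "cos x \<noteq> 1"
  proof
    assume c: "cos x = 1"
    then have "sin x = 0" using sin_cos_squared_add[of x] by simp
    then have "cis x = 1" using c by (simp add: complex_eq_iff)
    then show False using th_ne1[OF assms, of t] unfolding x_def by simp
  qed
  then show "2 - 2 * cos (th n t) > 0" using cos_le_one[of x] unfolding x_def by linarith
qed

lemma sum_cc: assumes "n > 0" shows "(\<Sum>t<n. 1 / (2 - 2 * cos (th n t))) = real n ^ 2 / 4"
proof -
  have "complex_of_real (\<Sum>t<n. 1 / (2 - 2 * cos (th n t))) = FF n 0"
    unfolding FF_def using cc_real(1)[OF assms] by simp
  also have "\<dots> = complex_of_real (real n ^ 2 / 4)" unfolding FF0 by simp
  finally show ?thesis by (simp only: of_real_eq_iff)
qed



definition vmul :: "complex^'n \<Rightarrow> complex^'n \<Rightarrow> complex^'n" where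
  "vmul x y = (\<chi> i. x$i * y$i)"

definition Gs :: "(complex^'n) set \<Rightarrow> real \<Rightarrow> (complex^'n) set" where
  "Gs B s = (\<lambda>y. s *\<^sub>R y) ` (convex hull B)"

lemma Gs_one: "Gs B 1 = convex hull B" unfolding Gs_def by simp

lemma Gs_zero_mem: "0 \<in> convex hull B \<Longrightarrow> 0 \<in> Gs B s"
  unfolding Gs_def by (rule image_eqI[of _ _ 0]) auto

lemma Gs_scale: "y \<in> Gs B s \<Longrightarrow> c *\<^sub>R y \<in> Gs B (c * s)"
  unfolding Gs_def by auto

lemma Gs_add:
  assumes B0: "0 \<in> convex hull B" and s: "0 \<le> s" "0 \<le> s'" and y: "y \<in> Gs B s" and z: "z \<in> Gs B s'"
  shows "y + z \<in> Gs B (s + s')"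
proof -
  obtain y' z' where y': "y' \<in> convex hull B" "y = s *\<^sub>R y'" and z': "z' \<in> convex hull B" "z = s' *\<^sub>R z'"
    using y z unfolding Gs_def by auto
  show ?thesis
  proof (cases "s + s' = 0")
    case True
    then have "s = 0" "s' = 0" using s by auto
    then show ?thesis using y' z' Gs_zero_mem[OF B0] by simp
  next
    case False
    then have pos: "s + s' > 0" using s by simp
    define w where "w = (s / (s + s')) *\<^sub>R y' + (s' / (s + s')) *\<^sub>R z'"
    have "w \<in> convex hull B" unfolding w_def
      by (rule convexD[OF convex_convex_hull y'(1) z'(1)]) (use s pos in \<open>auto simp: add_divide_distrib[symmetric]\<close>)
    moreover have "y + z = (s + s') *\<^sub>R w" unfolding w_def y'(2) z'(2) using pos
      by (simp add: scaleR_add_right)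
    ultimately show ?thesis unfolding Gs_def by auto
  qed
qed

lemma Gs_mono:
  assumes B0: "0 \<in> convex hull B" and "0 \<le> s" "s \<le> s'" and "y \<in> Gs B s"
  shows "y \<in> Gs B s'"
proof -
  have "y + 0 \<in> Gs B (s + (s' - s))" by (rule Gs_add[OF B0]) (use assms Gs_zero_mem[OF B0] in auto)
  then show ?thesis by simp
qed

lemma Gs_sum:
  assumes B0: "0 \<in> convex hull B" and "finite I" and "\<And>i. i \<in> I \<Longrightarrow> 0 \<le> s i"
    and "\<And>i. i \<in> I \<Longrightarrow> y i \<in> Gs B (s i)"
  shows "(\<Sum>i\<in>I. y i) \<in> Gs B (\<Sum>i\<in>I. s i)"
  using assms(2-)
proof (induction I rule: finite_induct)
  case empty then show ?case using Gs_zero_mem[OF B0] by simp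
next
  case (insert x F)
  then show ?case by (simp, intro Gs_add[OF B0]) (auto intro: sum_nonneg)
qed

lemma Gs_closed: assumes "compact B" shows "closed (Gs B s)"
  unfolding Gs_def by (intro compact_imp_closed compact_scaling compact_convex_hull assms)

lemma cis_per: "z \<in> \<int> \<Longrightarrow> cis (x + 2 * pi * z) = cis x"
  by (simp add: cis_mult[symmetric])

lemma steer_frac: "steer idx f \<phi> = steer idx (frac f) (frac \<phi>)"
proof -
  have a: "cis (2 * pi * \<phi>) = cis (2 * pi * frac \<phi>)"
    using cis_per[of "of_int \<lfloor>\<phi>\<rfloor>" "2 * pi * frac \<phi>"] by (simp add: frac_def algebra_simps)
  have b: "cis (2 * pi * real k * f) = cis (2 * pi * real k * frac f)" for k
    using cis_per[of "of_int (int k * \<lfloor>f\<rfloor>)" "2 * pi * real k * frac f"] by (simp add: frac_def algebra_simps)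
  show ?thesis unfolding steer_def using a b by simp
qed

lemma steer_in: "steer idx f \<phi> \<in> atoms_cont idx"
  unfolding atoms_cont_def using frac_lt_1 frac_ge_0 steer_frac
  by (metis (mono_tags, lifting) atLeastAtMost_iff less_eq_real_def mem_Collect_eq)

lemma vmul_steer: "vmul (steer idx f \<phi>) (steer idx f' \<phi>') = steer idx (f + f') (\<phi> + \<phi>')"
  unfolding vmul_def steer_def
  by (simp add: vec_eq_iff) (simp add: cis_mult[symmetric] algebra_simps)

lemma vmul_comm: "vmul x y = vmul y x" unfolding vmul_def by (simp add: mult.commute)

lemma vmul_lin: "vmul a (u *\<^sub>R x + v *\<^sub>R y) = u *\<^sub>R vmul a x + v *\<^sub>R vmul a y"
  unfolding vmul_def by (simp add: vec_eq_iff scaleR_conv_of_real algebra_simps)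

lemma vmul_scale: "vmul (s *\<^sub>R x) (t *\<^sub>R y) = (s * t) *\<^sub>R vmul x y"
  unfolding vmul_def by (simp add: vec_eq_iff scaleR_conv_of_real algebra_simps)

lemma steer_half: "steer idx f (\<phi> + 1/2) = - steer idx f \<phi>"
proof -
  have "cis (2 * pi * (\<phi> + 1/2)) = - cis (2 * pi * \<phi>)"
  proof -
    have "cis (2 * pi * (\<phi> + 1/2)) = cis (2 * pi * \<phi>) * cis pi" unfolding cis_mult by (simp add: algebra_simps)
    then show ?thesis by simp
  qed
  then show ?thesis unfolding steer_def by (simp add: vec_eq_iff)
qed

lemma zero_conv_gen:
  assumes "a \<in> B" "- a \<in> B" shows "0 \<in> convex hull B"
proof -
  have "(1/2) *\<^sub>R a + (1/2) *\<^sub>R (- a) \<in> convex hull B"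
    by (rule convexD[OF convex_convex_hull]) (use assms hull_inc in auto)
  then show ?thesis by simp
qed

lemma zero_convA: "0 \<in> convex hull (atoms_cont idx)"
proof (rule zero_conv_gen[of "steer idx 0 0"])
  show "steer idx 0 0 \<in> atoms_cont idx" by (rule steer_in)
  have "- steer idx 0 0 = steer idx 0 (0 + 1/2)" using steer_half[of idx 0 0] by simp
  then show "- steer idx 0 0 \<in> atoms_cont idx" using steer_in by simp
qed

lemma zero_convAN: assumes "N > 0" shows "0 \<in> convex hull (atoms_grid idx N)"
proof (rule zero_conv_gen[of "steer idx (real 0 / real N) 0"])
  show "steer idx (real 0 / real N) 0 \<in> atoms_grid idx N" unfolding atoms_grid_def using assms by force
  have "- steer idx (real 0 / real N) 0 = steer idx (real 0 / real N) (1/2)" using steer_half[of idx _ 0] by simp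
  then show "- steer idx (real 0 / real N) 0 \<in> atoms_grid idx N" unfolding atoms_grid_def using assms by force
qed

lemma conv_mul1:
  assumes "a \<in> atoms_cont idx" "z \<in> convex hull (atoms_cont idx)"
  shows "vmul a z \<in> convex hull (atoms_cont idx)"
proof -
  have "convex hull (atoms_cont idx) \<subseteq> {z. vmul a z \<in> convex hull (atoms_cont idx)}"
  proof (rule hull_minimal)
    show "atoms_cont idx \<subseteq> {z. vmul a z \<in> convex hull atoms_cont idx}"
    proof
      fix b assume "b \<in> atoms_cont idx"
      then obtain f \<phi> f' \<phi>' where "a = steer idx f \<phi>" "b = steer idx f' \<phi>'"
        using assms(1) unfolding atoms_cont_def by blast
      then have "vmul a b = steer idx (f + f') (\<phi> + \<phi>')" by (simp add: vmul_steer)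
      then have "vmul a b \<in> atoms_cont idx" by (simp add: steer_in)
      then show "b \<in> {z. vmul a z \<in> convex hull atoms_cont idx}" by (simp add: hull_inc)
    qed
    show "convex {z. vmul a z \<in> convex hull atoms_cont idx}"
    proof (rule convexI)
      fix x y u v assume "x \<in> {z. vmul a z \<in> convex hull atoms_cont idx}" "y \<in> {z. vmul a z \<in> convex hull atoms_cont idx}"
        "0 \<le> (u::real)" "0 \<le> v" "u + v = 1"
      then show "u *\<^sub>R x + v *\<^sub>R y \<in> {z. vmul a z \<in> convex hull atoms_cont idx}"
        unfolding mem_Collect_eq vmul_lin by (intro convexD[OF convex_convex_hull]) auto
    qed
  qed
  then show ?thesis using assms(2) by blast
qed

lemma conv_mul:
  assumes "y \<in> convex hull (atoms_cont idx)" "z \<in> convex hull (atoms_cont idx)"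
  shows "vmul y z \<in> convex hull (atoms_cont idx)"
proof -
  have "convex hull (atoms_cont idx) \<subseteq> {y. vmul y z \<in> convex hull (atoms_cont idx)}"
  proof (rule hull_minimal)
    show "atoms_cont idx \<subseteq> {y. vmul y z \<in> convex hull atoms_cont idx}" using conv_mul1[OF _ assms(2)] by blast
    show "convex {y. vmul y z \<in> convex hull atoms_cont idx}"
    proof (rule convexI)
      fix x y u v assume "x \<in> {y. vmul y z \<in> convex hull atoms_cont idx}" "y \<in> {y. vmul y z \<in> convex hull atoms_cont idx}"
        "0 \<le> (u::real)" "0 \<le> v" "u + v = 1"
      then show "u *\<^sub>R x + v *\<^sub>R y \<in> {y. vmul y z \<in> convex hull atoms_cont idx}"
        unfolding mem_Collect_eq vmul_comm[of _ z] vmul_lin by (intro convexD[OF convex_convex_hull]) auto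
    qed
  qed
  then show ?thesis using assms(1) by blast
qed

lemma Gs_mul:
  assumes "y \<in> Gs (atoms_cont idx) s" "z \<in> Gs (atoms_cont idx) t"
  shows "vmul y z \<in> Gs (atoms_cont idx) (s * t)"
proof -
  obtain y' z' where "y' \<in> convex hull (atoms_cont idx)" "y = s *\<^sub>R y'" "z' \<in> convex hull (atoms_cont idx)" "z = t *\<^sub>R z'"
    using assms unfolding Gs_def by auto
  then show ?thesis unfolding Gs_def using conv_mul vmul_scale by blast
qed

lemma const_in: "(\<chi> i. c) \<in> Gs (atoms_cont idx) (norm c)"
proof (cases "c = 0")
  case True
  then show ?thesis using Gs_zero_mem[OF zero_convA] by (simp add: zero_vec_def)
next
  case False
  have "steer idx 0 (Arg c / (2 * pi)) = (\<chi> i. cis (Arg c))" unfolding steer_def by simp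
  also have "cis (Arg c) = sgn c" using False by (rule cis_Arg)
  finally have st: "steer idx 0 (Arg c / (2 * pi)) = (\<chi> i. sgn c)" .
  have "(\<chi> i. c) = norm c *\<^sub>R steer idx 0 (Arg c / (2 * pi))"
  proof -
    have "norm c *\<^sub>R sgn c = c" using False by (simp add: scaleR_conv_of_real Complex.sgn_eq)
    then show ?thesis unfolding st by (simp add: vec_eq_iff)
  qed
  moreover have "steer idx 0 (Arg c / (2 * pi)) \<in> convex hull atoms_cont idx" by (simp add: hull_inc steer_in)
  ultimately show ?thesis unfolding Gs_def by (rule image_eqI)
qed


lemma compact_atoms: "compact (atoms_cont idx)"
proof -
  have "atoms_cont idx = (\<lambda>p. steer idx (fst p) (snd p)) ` ({0..1} \<times> {0..1})"
    unfolding atoms_cont_def by force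
  moreover have "continuous_on ({0..1} \<times> {0..1}) (\<lambda>p::real\<times>real. steer idx (fst p) (snd p))"
    unfolding steer_def by (intro continuous_on_vec_lambda continuous_intros)
  ultimately show ?thesis by (metis compact_Times compact_Icc compact_continuous_image)
qed

abbreviation "GA idx \<equiv> Gs (atoms_cont idx)"

lemma ramp_vec:
  fixes idx :: "'n::finite \<Rightarrow> nat"
  assumes "\<And>i. idx i < n"
  shows "(\<chi> i. complex_of_nat (idx i)) \<in> GA idx (real n)"
proof -
  have n: "n > 0" using assms[of undefined] by simp
  define v where "v t = vmul (\<chi> i. - (2 / of_nat n) * cc n t) (steer idx (th n t / (2 * pi)) 0)" for t
  have eq: "(\<chi> i. complex_of_nat (idx i)) = (\<chi> i. complex_of_real (real n / 2)) + (\<Sum>t<n. v t)"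
  proof (subst vec_eq_iff, rule allI)
    fix i
    have k: "idx i \<le> n" using assms[of i] by simp
    have "(\<Sum>t<n. v t) $ i = (\<Sum>t<n. - (2 / of_nat n) * (cc n t * cis (th n t * real (idx i))))"
      unfolding v_def vmul_def steer_def by (simp add: algebra_simps)
    also have "\<dots> = - (2 / of_nat n) * FF n (idx i)" unfolding FF_def sum_distrib_left ..
    finally show "(\<chi> i. complex_of_nat (idx i)) $ i = ((\<chi> i. complex_of_real (real n / 2)) + (\<Sum>t<n. v t)) $ i"
      using ramp_identity[OF k n] by simp
  qed
  have cpos: "0 \<le> 2 / real n * (1 / (2 - 2 * cos (th n t)))" for t using cc_real(2)[OF n, of t] by simp
  have vin: "v t \<in> GA idx (2 / real n * (1 / (2 - 2 * cos (th n t))) * 1)" for t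
  proof -
    have "norm (- (2 / of_nat n) * cc n t) = 2 / real n * (1 / (2 - 2 * cos (th n t)))"
    proof -
      have "- (2 / of_nat n) * cc n t = complex_of_real (- (2 / real n * (1 / (2 - 2 * cos (th n t)))))"
        using cc_real(1)[OF n, of t] by simp
      then show ?thesis using cpos[of t] by (simp only: norm_of_real abs_minus_cancel abs_of_nonneg)
    qed
    then have "(\<chi> i. - (2 / of_nat n) * cc n t) \<in> GA idx (2 / real n * (1 / (2 - 2 * cos (th n t))))"
      using const_in by metis
    moreover have "steer idx (th n t / (2 * pi)) 0 \<in> GA idx 1" unfolding Gs_one by (simp add: hull_inc steer_in)
    ultimately show ?thesis unfolding v_def by (rule Gs_mul)
  qed
  have "(\<Sum>t<n. v t) \<in> GA idx (\<Sum>t<n. 2 / real n * (1 / (2 - 2 * cos (th n t))) * 1)"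
    by (rule Gs_sum[OF zero_convA]) (use cpos vin in auto)
  also have "(\<Sum>t<n. 2 / real n * (1 / (2 - 2 * cos (th n t))) * 1) = real n / 2"
    unfolding mult_1_right sum_distrib_left[symmetric] sum_cc[OF n] using n by (simp add: power2_eq_square)
  finally have s1: "(\<Sum>t<n. v t) \<in> GA idx (real n / 2)" .
  have s0: "(\<chi> i. complex_of_real (real n / 2)) \<in> GA idx (real n / 2)"
    using const_in[of "complex_of_real (real n / 2)" idx] by simp
  have "(\<chi> i. complex_of_real (real n / 2)) + (\<Sum>t<n. v t) \<in> GA idx (real n / 2 + real n / 2)"
    by (rule Gs_add[OF zero_convA _ _ s0 s1]) auto
  then show ?thesis unfolding eq by simp
qed


definition vpow :: "complex^'n \<Rightarrow> nat \<Rightarrow> complex^'n" where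
  "vpow x j = (\<chi> i. (x $ i) ^ j)"

lemma vpow_in:
  assumes "x \<in> GA idx s"
  shows "vpow x j \<in> GA idx (s ^ j)"
proof (induction j)
  case 0
  have "vpow x 0 = (\<chi> i. 1)" unfolding vpow_def by simp
  then show ?case using const_in[of "1::complex" idx] by simp
next
  case (Suc j)
  have "vpow x (Suc j) = vmul x (vpow x j)" unfolding vpow_def vmul_def by simp
  then show ?case using Gs_mul[OF assms Suc] by simp
qed

lemma exp_partial_le:
  assumes "0 \<le> (s::real)"
  shows "(\<Sum>j<J. 1 / fact (Suc j) * s ^ Suc j) \<le> exp s - 1"
proof -
  have "(\<lambda>j. s ^ Suc j /\<^sub>R fact (Suc j)) sums (exp s - 1)"
    using exp_converges[of s] sums_Suc_iff[of "\<lambda>j. s ^ j /\<^sub>R fact j" "exp s - 1"] by simp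
  then have "(\<Sum>j<J. s ^ Suc j /\<^sub>R fact (Suc j)) \<le> exp s - 1"
    using sum_le_suminf[of "\<lambda>j. s ^ Suc j /\<^sub>R fact (Suc j)" "{..<J}"] assms
    by (simp add: sums_iff)
  then show ?thesis by (simp add: divide_inverse mult.commute)
qed

lemma exp_vec:
  fixes idx :: "'n::finite \<Rightarrow> nat"
  assumes "\<And>i. idx i < n"
  shows "(\<chi> i. cis (\<theta> * real (idx i)) - 1) \<in> GA idx (exp (\<bar>\<theta>\<bar> * real n) - 1)"
proof -
  define X where "X = vmul (\<chi> i. \<i> * complex_of_real \<theta>) (\<chi> i. complex_of_nat (idx i))"
  define s where "s = \<bar>\<theta>\<bar> * real n"
  have s0: "0 \<le> s" unfolding s_def by simp
  have X: "X \<in> GA idx s" unfolding X_def s_def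
    using Gs_mul[OF const_in[of "\<i> * complex_of_real \<theta>" idx] ramp_vec[of idx n, OF assms]] by (simp add: norm_mult)
  define P where "P J = (\<Sum>j<J. (1 / fact (Suc j)) *\<^sub>R vpow X (Suc j))" for J
  have PG: "P J \<in> GA idx (exp s - 1)" for J
  proof -
    have "P J \<in> GA idx (\<Sum>j<J. 1 / fact (Suc j) * s ^ Suc j)" unfolding P_def
    proof (rule Gs_sum[OF zero_convA])
      fix j
      show "0 \<le> 1 / fact (Suc j) * s ^ Suc j" using s0 by simp
      show "(1 / fact (Suc j)) *\<^sub>R vpow X (Suc j) \<in> GA idx (1 / fact (Suc j) * s ^ Suc j)"
        by (rule Gs_scale[OF vpow_in[OF X]])
    qed simp
    then show ?thesis
      by (rule Gs_mono[OF zero_convA, rotated 2]) (use s0 exp_partial_le[OF s0] in \<open>auto intro!: sum_nonneg\<close>)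
  qed
  have lim: "P \<longlonglongrightarrow> (\<chi> i. cis (\<theta> * real (idx i)) - 1)"
  proof (rule vec_tendstoI)
    fix i
    define z where "z = \<i> * complex_of_real (\<theta> * real (idx i))"
    have Xi: "X $ i = z" unfolding X_def vmul_def z_def by simp
    have "(\<lambda>j. z ^ Suc j /\<^sub>R fact (Suc j)) sums (exp z - 1)"
      using exp_converges[of z] sums_Suc_iff[of "\<lambda>j. z ^ j /\<^sub>R fact j" "exp z - 1"] by simp
    then have "(\<lambda>J. \<Sum>j<J. z ^ Suc j /\<^sub>R fact (Suc j)) \<longlonglongrightarrow> exp z - 1" by (simp add: sums_def)
    moreover have "P J $ i = (\<Sum>j<J. z ^ Suc j /\<^sub>R fact (Suc j))" for J
      unfolding P_def vpow_def using Xi by (simp add: divide_inverse)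
    moreover have "exp z = cis (\<theta> * real (idx i))" unfolding z_def cis_conv_exp by simp
    ultimately show "(\<lambda>J. P J $ i) \<longlonglongrightarrow> (\<chi> i. cis (\<theta> * real (idx i)) - 1) $ i" by simp
  qed
  show ?thesis unfolding s_def[symmetric]
    by (rule closed_sequentially[OF Gs_closed[OF compact_atoms] PG lim])
qed


lemma exp_small: fixes x :: real assumes "0 \<le> x" "x \<le> 1" shows "exp x - 1 \<le> 2 * x"
proof -
  have "exp x \<le> 1 + x + x\<^sup>2" by (rule exp_bound[OF assms])
  moreover have "x\<^sup>2 \<le> x" using assms by (simp add: power2_eq_square mult_left_le)
  ultimately show ?thesis by simp
qed

lemma approx_atom:
  fixes idx :: "'n::finite \<Rightarrow> nat"
  assumes idx: "\<And>i. idx i < n" and N: "N > 0" and r: "2 * pi * real n / real N \<le> 1"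
    and a: "a \<in> atoms_cont idx"
  shows "\<exists>u \<in> atoms_grid idx N. a - u \<in> GA idx (2 * pi * real n / real N)"
proof -
  obtain f \<phi> where f: "f \<in> {0..1}" and ph: "\<phi> \<in> {0..1}" and a_eq: "a = steer idx f \<phi>"
    using a unfolding atoms_cont_def by blast
  define m' where "m' = nat (round (f * real N))"
  have rnd: "\<bar>of_int (round (f * real N)) - f * real N\<bar> \<le> 1/2" by (rule of_int_round_abs_le)
  have rnd0: "round (f * real N) \<ge> 0" using f N by (simp add: round_def)
  have m'_eq: "real m' = of_int (round (f * real N))" unfolding m'_def using rnd0 by simp
  have "f * real N \<le> real N" using f N by simp
  then have "real m' \<le> real N + 1/2" using rnd m'_eq by linarith
  then have m'N: "m' \<le> N" by linarith
  define m where "m = (if m' = N then 0 else m')"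
  have mN: "m < N" unfolding m_def using m'N N by auto
  define \<delta> where "\<delta> = f - real m' / real N"
  have \<delta>: "\<bar>\<delta>\<bar> \<le> 1 / (2 * real N)"
  proof -
    have "\<delta> = (f * real N - real m') / real N" unfolding \<delta>_def using N by (simp add: field_simps)
    then have "\<bar>\<delta>\<bar> = \<bar>f * real N - real m'\<bar> / real N" by (simp add: abs_div_pos)
    also have "\<dots> \<le> (1/2) / real N"
    proof (rule divide_right_mono)
      show "\<bar>f * real N - real m'\<bar> \<le> 1/2" using rnd unfolding m'_eq by (simp add: abs_minus_commute)
    qed simp
    finally show ?thesis by simp
  qed
  define \<theta> where "\<theta> = 2 * pi * \<delta>"
  define u where "u = steer idx (real m / real N) \<phi>"
  have u: "u \<in> atoms_grid idx N" unfolding u_def atoms_grid_def using mN ph by blast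
  have key: "cis (2 * pi * real k * f) = cis (2 * pi * real k * (real m / real N)) * cis (\<theta> * real k)" for k
  proof -
    have "cis (2 * pi * real k * f) = cis (2 * pi * real k * (real m' / real N)) * cis (\<theta> * real k)"
      unfolding cis_mult \<theta>_def \<delta>_def by (rule arg_cong[where f=cis]) (simp add: algebra_simps)
    moreover have "cis (2 * pi * real k * (real m' / real N)) = cis (2 * pi * real k * (real m / real N))"
    proof (cases "m' = N")
      case True
      have "cis (2 * pi * real k) = 1" using cis_multiple_2pi[of "real k"] by simp
      then show ?thesis using True N unfolding m_def by simp
    next
      case False then show ?thesis unfolding m_def by simp
    qed
    ultimately show ?thesis by simp
  qed
  have diff: "a - u = vmul u (\<chi> i. cis (\<theta> * real (idx i)) - 1)"
    unfolding a_eq u_def vmul_def steer_def using key by (simp add: vec_eq_iff algebra_simps)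
  have uG: "u \<in> GA idx 1" unfolding Gs_one u_def by (intro hull_inc steer_in)
  have "a - u \<in> GA idx (1 * (exp (\<bar>\<theta>\<bar> * real n) - 1))"
    unfolding diff by (rule Gs_mul[OF uG exp_vec[of idx n, OF idx]])
  moreover have "exp (\<bar>\<theta>\<bar> * real n) - 1 \<le> 2 * pi * real n / real N"
  proof -
    have "\<bar>\<theta>\<bar> * real n \<le> 2 * pi * (1 / (2 * real N)) * real n"
    proof -
      have t: "\<bar>\<theta>\<bar> = 2 * pi * \<bar>\<delta>\<bar>" unfolding \<theta>_def by (simp add: abs_mult)
      have "2 * pi * \<bar>\<delta>\<bar> \<le> 2 * pi * (1 / (2 * real N))" using \<delta> by (intro mult_left_mono) auto
      then show ?thesis unfolding t by (intro mult_right_mono) auto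
    qed
    also have "\<dots> = pi * real n / real N" using N by simp
    finally have x: "\<bar>\<theta>\<bar> * real n \<le> pi * real n / real N" .
    have h: "pi * real n / real N \<le> 1/2" using r by (simp add: mult_ac)
    have "exp (\<bar>\<theta>\<bar> * real n) - 1 \<le> 2 * (\<bar>\<theta>\<bar> * real n)"
      by (rule exp_small) (simp, use x h in linarith)
    also have "\<dots> \<le> 2 * pi * real n / real N" using x by simp
    finally show ?thesis .
  qed
  moreover have "0 \<le> 1 * (exp (\<bar>\<theta>\<bar> * real n) - 1)" by simp
  ultimately have "a - u \<in> GA idx (2 * pi * real n / real N)"
    using Gs_mono[OF zero_convA, of "1 * (exp (\<bar>\<theta>\<bar> * real n) - 1)" "2 * pi * real n / real N"] by simp
  then show ?thesis using u by blast
qed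


lemma closure_step:
  fixes A B :: "(complex^'n) set"
  assumes A0: "0 \<in> convex hull A" and B0: "0 \<in> convex hull B" and cA: "compact A" and cB: "compact B"
    and r0: "0 \<le> r" and r1: "r < 1"
    and H: "\<And>a. a \<in> A \<Longrightarrow> \<exists>u\<in>B. a - u \<in> Gs A r"
  shows "convex hull A \<subseteq> Gs B (1 / (1 - r))"
proof -
  have stepa: "convex hull A \<subseteq> {y. \<exists>u\<in>convex hull B. y - u \<in> Gs A r}"
  proof (rule hull_minimal)
    show "A \<subseteq> {y. \<exists>u\<in>convex hull B. y - u \<in> Gs A r}" using H hull_inc by fastforce
    show "convex {y. \<exists>u\<in>convex hull B. y - u \<in> Gs A r}"
    proof (rule convexI)
      fix x y and \<mu> \<nu> :: real
      assume x: "x \<in> {y. \<exists>u\<in>convex hull B. y - u \<in> Gs A r}" and y: "y \<in> {y. \<exists>u\<in>convex hull B. y - u \<in> Gs A r}"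
        and m: "0 \<le> \<mu>" "0 \<le> \<nu>" "\<mu> + \<nu> = 1"
      obtain u1 where u1: "u1 \<in> convex hull B" "x - u1 \<in> Gs A r" using x by blast
      obtain u2 where u2: "u2 \<in> convex hull B" "y - u2 \<in> Gs A r" using y by blast
      have "\<mu> *\<^sub>R u1 + \<nu> *\<^sub>R u2 \<in> convex hull B" by (rule convexD[OF convex_convex_hull u1(1) u2(1) m])
      moreover have "\<mu> *\<^sub>R (x - u1) + \<nu> *\<^sub>R (y - u2) \<in> Gs A (\<mu> * r + \<nu> * r)"
        by (rule Gs_add[OF A0]) (use m r0 Gs_scale u1(2) u2(2) in auto)
      moreover have "\<mu> * r + \<nu> * r = r" using m by (simp add: distrib_right[symmetric])
      moreover have "\<mu> *\<^sub>R (x - u1) + \<nu> *\<^sub>R (y - u2) = (\<mu> *\<^sub>R x + \<nu> *\<^sub>R y) - (\<mu> *\<^sub>R u1 + \<nu> *\<^sub>R u2)"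
        by (simp add: algebra_simps)
      ultimately show "\<mu> *\<^sub>R x + \<nu> *\<^sub>R y \<in> {y. \<exists>u\<in>convex hull B. y - u \<in> Gs A r}" by auto
    qed
  qed
  have stepb: "\<forall>y\<in>convex hull A. \<exists>u \<in> Gs B (\<Sum>j<K. r ^ j). y - u \<in> Gs A (r ^ K)" for K
  proof (induction K)
    case 0
    show ?case
    proof
      fix y assume "y \<in> convex hull A"
      then have "y - 0 \<in> Gs A (r ^ 0)" using Gs_one[of A] by simp
      moreover have "(0::complex^'n) \<in> Gs B (\<Sum>j<0. r ^ j)" using Gs_zero_mem[OF B0] by blast
      ultimately show "\<exists>u\<in>Gs B (\<Sum>j<0. r ^ j). y - u \<in> Gs A (r ^ 0)" by blast
    qed
  next
    case (Suc K)
    show ?case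
    proof
      fix y assume y: "y \<in> convex hull A"
      obtain u where u: "u \<in> Gs B (\<Sum>j<K. r ^ j)" "y - u \<in> Gs A (r ^ K)" using Suc y by blast
      obtain z where z: "z \<in> convex hull A" "y - u = r ^ K *\<^sub>R z" using u(2) unfolding Gs_def by blast
      obtain u' where u': "u' \<in> convex hull B" "z - u' \<in> Gs A r" using stepa z(1) by blast
      have "u + r ^ K *\<^sub>R u' \<in> Gs B ((\<Sum>j<K. r ^ j) + r ^ K * 1)"
        by (rule Gs_add[OF B0 _ _ u(1)]) (use r0 Gs_scale[of u' B 1 "r ^ K"] u'(1) Gs_one[of B] in \<open>auto intro: sum_nonneg\<close>)
      moreover have "y - (u + r ^ K *\<^sub>R u') = r ^ K *\<^sub>R (z - u')" using z(2) by (simp add: algebra_simps)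
      moreover have "r ^ K *\<^sub>R (z - u') \<in> Gs A (r ^ K * r)" by (rule Gs_scale[OF u'(2)])
      ultimately show "\<exists>u\<in>Gs B (\<Sum>j<Suc K. r ^ j). y - u \<in> Gs A (r ^ Suc K)"
        by (metis mult.commute mult_1_right power_Suc sum.lessThan_Suc)
    qed
  qed
  obtain M where M: "\<And>z. z \<in> convex hull A \<Longrightarrow> norm z \<le> M"
    using compact_imp_bounded[OF compact_convex_hull[OF cA]] unfolding bounded_iff by blast
  show ?thesis
  proof
    fix y assume y: "y \<in> convex hull A"
    have "y \<in> closure (Gs B (1 / (1 - r)))"
      unfolding closure_approachable
    proof (intro allI impI)
      fix \<epsilon> :: real assume e: "\<epsilon> > 0"
      have M0: "0 \<le> M" using M[OF y] norm_ge_zero order_trans by blast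
      obtain K where K: "r ^ K < \<epsilon> / (M + 1)" using real_arch_pow_inv[of "\<epsilon> / (M + 1)" r] e M0 r1 by auto
      obtain u where u: "u \<in> Gs B (\<Sum>j<K. r ^ j)" "y - u \<in> Gs A (r ^ K)" using stepb y by blast
      obtain z where z: "z \<in> convex hull A" "y - u = r ^ K *\<^sub>R z" using u(2) unfolding Gs_def by blast
      have "(\<Sum>j<K. r ^ j) \<le> 1 / (1 - r)"
      proof -
        have "(\<Sum>j<K. r ^ j) = (1 - r ^ K) / (1 - r)" using sum_gp_strict[of r K] r1 by simp
        also have "\<dots> \<le> 1 / (1 - r)" using r0 r1 by (intro divide_right_mono) auto
        finally show ?thesis .
      qed
      moreover have s0: "0 \<le> (\<Sum>j<K. r ^ j)" by (intro sum_nonneg) (use r0 in auto)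
      ultimately have uB: "u \<in> Gs B (1 / (1 - r))" using Gs_mono[OF B0 s0 _ u(1)] by blast
      have "dist u y = norm (r ^ K *\<^sub>R z)" unfolding z(2)[symmetric] by (simp add: dist_norm norm_minus_commute)
      also have "\<dots> = r ^ K * norm z" using r0 by simp
      also have "\<dots> \<le> r ^ K * M" using M[OF z(1)] r0 by (intro mult_left_mono) auto
      also have "\<dots> \<le> \<epsilon> / (M + 1) * M" using K M0 by (intro mult_right_mono) auto
      also have "\<dots> < \<epsilon>" using e M0 by (simp add: field_simps)
      finally show "\<exists>u\<in>Gs B (1 / (1 - r)). dist u y < \<epsilon>" using uB by blast
    qed
    then show "y \<in> Gs B (1 / (1 - r))" using Gs_closed[OF cB] closure_closed by metis
  qed
qed


lemma compact_grid: "compact (atoms_grid idx N)"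
proof -
  have "atoms_grid idx N = (\<Union>m\<in>{..<N}. (\<lambda>\<phi>. steer idx (real m / real N) \<phi>) ` {0..1})"
    unfolding atoms_grid_def by force
  moreover have "compact ((\<lambda>\<phi>. steer idx (real m / real N) \<phi>) ` {0..1})" for m
    by (intro compact_continuous_image compact_Icc) (unfold steer_def, intro continuous_on_vec_lambda continuous_intros)
  ultimately show ?thesis by auto
qed

lemma grid_sub: "atoms_grid idx N \<subseteq> atoms_cont idx"
  unfolding atoms_grid_def using steer_in by blast

lemma atomic_norm_nonneg: "0 \<le> atomic_norm B x"
  unfolding atomic_norm_def by (rule Inf_greatest) auto

theorem mainTheorem9:
  fixes idx :: "'n::finite \<Rightarrow> nat" and N :: nat and x :: "complex ^ 'n"
  assumes "bij_betw idx UNIV {..<CARD('n)}"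
    and "N > 0"
  shows "ereal (1 - 2 * pi * real CARD('n) / real N) * atomic_norm (atoms_grid idx N) x
           \<le> atomic_norm (atoms_cont idx) x
       \<and> atomic_norm (atoms_cont idx) x \<le> atomic_norm (atoms_grid idx N) x"
proof
  define n where "n = CARD('n)"
  have idx: "\<And>i. idx i < n" using assms(1) unfolding n_def bij_betw_def by auto
  define r where "r = 2 * pi * real n / real N"
  have r0: "0 \<le> r" unfolding r_def by simp
  show "atomic_norm (atoms_cont idx) x \<le> atomic_norm (atoms_grid idx N) x"
    unfolding atomic_norm_def
  proof (rule Inf_superset_mono)
    have "convex hull atoms_grid idx N \<subseteq> convex hull atoms_cont idx" by (rule hull_mono[OF grid_sub])
    then show "{ereal t |t. 0 < t \<and> x \<in> (\<lambda>y. t *\<^sub>R y) ` (convex hull atoms_grid idx N)}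
      \<subseteq> {ereal t |t. 0 < t \<and> x \<in> (\<lambda>y. t *\<^sub>R y) ` (convex hull atoms_cont idx)}" by blast
  qed
  show "ereal (1 - 2 * pi * real CARD('n) / real N) * atomic_norm (atoms_grid idx N) x
           \<le> atomic_norm (atoms_cont idx) x"
  proof (cases "1 - r \<le> 0")
    case True
    have G: "0 \<le> atomic_norm (atoms_grid idx N) x" by (rule atomic_norm_nonneg)
    have "ereal (1 - r) * atomic_norm (atoms_grid idx N) x \<le> 0"
    proof (cases "atomic_norm (atoms_grid idx N) x")
      case (real g)
      then have "0 \<le> g" using G by simp
      then show ?thesis using real True by (simp add: mult_nonpos_nonneg)
    next
      case PInf then show ?thesis using True by (cases "1 - r = 0") auto
    next
      case MInf then show ?thesis using G by simp
    qed
    also have "\<dots> \<le> atomic_norm (atoms_cont idx) x" by (rule atomic_norm_nonneg)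
    finally show ?thesis unfolding r_def n_def .
  next
    case False
    then have r1: "r < 1" by simp
    have sub: "convex hull atoms_cont idx \<subseteq> Gs (atoms_grid idx N) (1 / (1 - r))"
    proof (rule closure_step[OF zero_convA zero_convAN[OF assms(2)] compact_atoms compact_grid r0 r1])
      fix a assume "a \<in> atoms_cont idx"
      then show "\<exists>u\<in>atoms_grid idx N. a - u \<in> GA idx r"
        unfolding r_def using approx_atom[of idx n N a, OF idx assms(2)] r1 unfolding r_def by simp
    qed
    have "ereal (1 - r) * atomic_norm (atoms_grid idx N) x \<le> atomic_norm (atoms_cont idx) x"
      unfolding atomic_norm_def[of "atoms_cont idx"]
    proof (rule Inf_greatest)
      fix e assume "e \<in> {ereal t |t. 0 < t \<and> x \<in> (\<lambda>y. t *\<^sub>R y) ` (convex hull atoms_cont idx)}"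
      then obtain t y where t: "e = ereal t" "0 < t" "y \<in> convex hull atoms_cont idx" "x = t *\<^sub>R y" by blast
      obtain w where w: "w \<in> convex hull atoms_grid idx N" "y = (1 / (1 - r)) *\<^sub>R w"
        using sub t(3) unfolding Gs_def by blast
      have pos: "0 < t / (1 - r)" using t(2) r1 by simp
      have "x = (t / (1 - r)) *\<^sub>R w" using t(4) w(2) by simp
      then have "ereal (t / (1 - r)) \<in> {ereal t |t. 0 < t \<and> x \<in> (\<lambda>y. t *\<^sub>R y) ` (convex hull atoms_grid idx N)}"
        using pos w(1) by blast
      then have "atomic_norm (atoms_grid idx N) x \<le> ereal (t / (1 - r))"
        unfolding atomic_norm_def by (rule Inf_lower)
      then have "ereal (1 - r) * atomic_norm (atoms_grid idx N) x \<le> ereal (1 - r) * ereal (t / (1 - r))"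
        by (rule ereal_mult_left_mono) (use r1 in simp)
      also have "\<dots> = e" using r1 t(1) by simp
      finally show "ereal (1 - r) * atomic_norm (atoms_grid idx N) x \<le> e" .
    qed
    then show ?thesis unfolding r_def n_def .
  qed
qed

end
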